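(* Let $K\subset\mathbb{R}^{n+m}$ be a convex body, let $\mathcal{U}=\{u_1,\dots,u_k\}$ be an ordered family of linearly independent vectors of $W$, let $y\in\Sigma_\pi K$ and let $\gamma$ be a measurable section with $y=\int_{\pi(K)}\gamma(x)\,\mathrm{d}x$. Then $y\in(\Sigma_\pi K)^{\mathcal{U}}$ if and only if $\gamma(x)\in (K_x)^{\mathcal{U}}$ for almost every $x\in\pi(K)$. Consequently $$(\Sigma_\pi K)^{\mathcal{U}}=\Big\{\int_{\pi(K)}\gamma(x)\,\mathrm{d}x : \gamma \text{ measurable section with } \gamma(x)\in (K_x)^{\mathcal{U}} \text{ for almost all } x\Big\}.$$
   Context: A convex body is a non-empty compact convex subset of a real vector space; its support function is $h_L(u)=\max\{\langle u,x\rangle : x\in L\}$. For a convex body $L$ and a vector $u$, the face in direction $u$ is $L^u:=\{y\in L:\langle u,y\rangle=h_L(u)\}$, and for an ordered family $\mathcal{U}=\{u_1,\dots,u_k\}$, $L^{\mathcal{U}}:=(\cdots((L^{u_1})^{u_2})\cdots)^{u_k}$. Let $V\subset\mathbb{R}^{n+m}$ be a linear subspace of dimension $n$, $W=V^\perp$, $\pi:\mathbb{R}^{n+m}\to V$ the orthogonal projection. For $x\in\pi(K)$ let $K_x:=\{y\in W : x+y\in K\}$. A section is a map $\gamma:\pi(K)\to W$ with $\gamma(x)\in K_x$ for all $x$; measurable means Borel measurable. The fiber body is $\Sigma_\pi K:=\{\int_{\pi(K)}\gamma(x)\,\mathrm{d}x : \gamma \text{ measurable section}\}\subset W$, with $\mathrm{d}x$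 Lebesgue measure on $V$. *)

theory Defs
  imports "HOL-Analysis.Analysis"
begin

text \<open>Ambient space R^(n+m) is modelled as the product 'v \<times> 'w of two Euclidean spaces,
  with V = 'v \<times> {0} (dimension n = DIM('v)) and W = V^perp = {0} \<times> 'w identified with 'w.\<close>

definition convex_body :: "'a::euclidean_space set \<Rightarrow> bool" where
  "convex_body L \<longleftrightarrow> L \<noteq> {} \<and> compact L \<and> convex L"

definition support_fun :: "'a::euclidean_space set \<Rightarrow> 'a \<Rightarrow> real" where
  "support_fun L u = Sup ((\<lambda>x. u \<bullet> x) ` L)"

definition face :: "'a::euclidean_space set \<Rightarrow> 'a \<Rightarrow> 'a set" where
  "face L u = {y \<in> L. u \<bullet> y = support_fun L u}"

definition faces :: "'a::euclidean_space set \<Rightarrow> 'a list \<Rightarrow> 'a set" where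
  "faces L us = foldl face L us"

definition fiber :: "('v::euclidean_space \<times> 'w::euclidean_space) set \<Rightarrow> 'v \<Rightarrow> 'w set" where
  "fiber K x = {y. (x, y) \<in> K}"

definition measurable_section ::
  "('v::euclidean_space \<times> 'w::euclidean_space) set \<Rightarrow> ('v \<Rightarrow> 'w) \<Rightarrow> bool" where
  "measurable_section K \<gamma> \<longleftrightarrow>
     set_borel_measurable lborel (fst ` K) \<gamma> \<and> (\<forall>x\<in>fst ` K. \<gamma> x \<in> fiber K x)"

definition fiber_body :: "('v::euclidean_space \<times> 'w::euclidean_space) set \<Rightarrow> 'w set" where
  "fiber_body K = {(LINT x:(fst ` K)|lborel. \<gamma> x) | \<gamma>. measurable_section K \<gamma>}"

end

theory Submission
  imports Defs
begin


lemma face_subset: "face L u \<subseteq> L" by (auto simp: face_def)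

lemma faces_snoc: "faces L (us @ [u]) = face (faces L us) u"
  by (simp add: faces_def)

lemma faces_Nil[simp]: "faces L [] = L" by (simp add: faces_def)

lemma faces_subset: "faces L us \<subseteq> L"
proof (induction us rule: rev_induct)
  case Nil then show ?case by simp
next
  case (snoc u us) then show ?case using face_subset[of "faces L us" u] by (simp add: faces_snoc)
qed

lemma faces_append: "faces L (us @ vs) = faces (faces L us) vs"
  by (simp add: faces_def)

lemma support_fun_max:
  fixes L :: "'a::euclidean_space set"
  assumes "compact L" "L \<noteq> {}"
  shows "\<exists>w\<in>L. u \<bullet> w = support_fun L u" and "\<And>w. w \<in> L \<Longrightarrow> u \<bullet> w \<le> support_fun L u"
proof -
  have c: "compact ((\<lambda>x. u \<bullet> x) ` L)"
    by (intro compact_continuous_image assms continuous_intros)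
  obtain s where s: "s \<in> (\<lambda>x. u \<bullet> x) ` L" "\<forall>t\<in>(\<lambda>x. u \<bullet> x) ` L. t \<le> s"
    using compact_attains_sup[OF c] assms by auto
  have "support_fun L u = s" unfolding support_fun_def
    using s by (intro cSup_eq_maximum) auto
  then show "\<exists>w\<in>L. u \<bullet> w = support_fun L u" "\<And>w. w \<in> L \<Longrightarrow> u \<bullet> w \<le> support_fun L u"
    using s by auto
qed

lemma face_compact:
  fixes L :: "'a::euclidean_space set"
  assumes "compact L" "L \<noteq> {}"
  shows "compact (face L u)" "face L u \<noteq> {}"
proof -
  have "face L u = L \<inter> {y. u \<bullet> y = support_fun L u}" by (auto simp: face_def)
  moreover have "closed {y. u \<bullet> y = support_fun L u}"
    by (intro closed_Collect_eq continuous_intros)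
  ultimately show "compact (face L u)" using assms(1) by (simp add: compact_Int_closed)
  show "face L u \<noteq> {}" using support_fun_max(1)[OF assms, of u] by (auto simp: face_def)
qed

lemma faces_compact:
  fixes L :: "'a::euclidean_space set"
  assumes "compact L" "L \<noteq> {}"
  shows "compact (faces L us) \<and> faces L us \<noteq> {}"
proof (induction us rule: rev_induct)
  case Nil then show ?case using assms by simp
next
  case (snoc u us) then show ?case using face_compact[of "faces L us" u] by (simp add: faces_snoc)
qed



lemma support_deriv:
  fixes F :: "'a::euclidean_space set"
  assumes cF: "compact F" and nF: "F \<noteq> {}"
  shows "(\<lambda>n. real (Suc n) * (support_fun F (a + (1 / real (Suc n)) *\<^sub>R v) - support_fun F a))
           \<longlonglongrightarrow> support_fun (face F a) v"
proof -
  define c where "c = support_fun F a"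
  define g where "g = support_fun (face F a) v"
  define q where "q = (\<lambda>n. real (Suc n) * (support_fun F (a + (1 / real (Suc n)) *\<^sub>R v) - c))"
  obtain R where R: "\<And>w. w \<in> F \<Longrightarrow> norm w \<le> R"
    using compact_imp_bounded[OF cF] by (auto simp: bounded_iff)
  have Rpos: "0 \<le> R" using R nF norm_ge_zero order_trans by blast
  obtain w0 where w0: "w0 \<in> face F a" "v \<bullet> w0 = g"
    using support_fun_max(1)[OF face_compact(1,2)[OF cF nF, of a], of v] unfolding g_def by auto
  have w0F: "w0 \<in> F" "a \<bullet> w0 = c" using w0 by (auto simp: face_def c_def)
  have gabs: "\<bar>g\<bar> \<le> norm v * R"
  proof -
    have "\<bar>v \<bullet> w0\<bar> \<le> norm v * norm w0" by (rule Cauchy_Schwarz_ineq2)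
    also have "\<dots> \<le> norm v * R" using R[OF w0F(1)] by (intro mult_left_mono) auto
    finally show ?thesis using w0(2) by simp
  qed
  have lower: "g \<le> q n" for n
  proof -
    define t where "t = 1 / real (Suc n)"
    have tpos: "t > 0" by (simp add: t_def)
    have "(a + t *\<^sub>R v) \<bullet> w0 \<le> support_fun F (a + t *\<^sub>R v)"
      using support_fun_max(2)[OF cF nF w0F(1)] by blast
    then have "c + t * g \<le> support_fun F (a + t *\<^sub>R v)"
      using w0 w0F by (simp add: inner_add_left)
    then have "t * g \<le> support_fun F (a + t *\<^sub>R v) - c" by simp
    then have "real (Suc n) * (t * g) \<le> real (Suc n) * (support_fun F (a + t *\<^sub>R v) - c)"
      by (intro mult_left_mono) auto
    then show ?thesis by (simp add: q_def t_def)
  qed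
  have upper: "\<exists>N. \<forall>n\<ge>N. q n < g + e" if e: "e > 0" for e
  proof -
    define C where "C = {w\<in>F. g + e \<le> v \<bullet> w}"
    have key: "q n \<le> v \<bullet> w" if "w \<in> F" "support_fun F (a + (1 / real (Suc n)) *\<^sub>R v) = (a + (1 / real (Suc n)) *\<^sub>R v) \<bullet> w" for n w
    proof -
      have "a \<bullet> w \<le> c" using support_fun_max(2)[OF cF nF that(1)] by (simp add: c_def)
      then have "real (Suc n) * (a \<bullet> w - c) \<le> 0" by (simp add: mult_nonneg_nonpos)
      moreover have "q n = real (Suc n) * (a \<bullet> w - c) + v \<bullet> w"
        unfolding q_def that(2) by (simp add: inner_add_left field_simps)
      ultimately show ?thesis by simp
    qed
    have maxw: "\<exists>w\<in>F. support_fun F (a + (1 / real (Suc n)) *\<^sub>R v) = (a + (1 / real (Suc n)) *\<^sub>R v) \<bullet> w" for n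
      using support_fun_max(1)[OF cF nF] by metis
    show ?thesis
    proof (cases "C = {}")
      case True
      show ?thesis
      proof (intro exI allI impI)
        fix n :: nat
        obtain w where w: "w \<in> F" "support_fun F (a + (1 / real (Suc n)) *\<^sub>R v) = (a + (1 / real (Suc n)) *\<^sub>R v) \<bullet> w"
          using maxw by blast
        have "v \<bullet> w < g + e" using True w(1) unfolding C_def by auto
        then show "q n < g + e" using key[OF w] by simp
      qed
    next
      case False
      have cC: "compact C"
      proof -
        have "C = F \<inter> {w. g + e \<le> v \<bullet> w}" by (auto simp: C_def)
        moreover have "closed {w. g + e \<le> v \<bullet> w}" by (intro closed_Collect_le continuous_intros)
        ultimately show ?thesis using cF by (simp add: compact_Int_closed)
      qed
      obtain ws where ws: "ws \<in> C" "\<And>w. w \<in> C \<Longrightarrow> a \<bullet> w \<le> a \<bullet> ws"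
        using support_fun_max[OF cC False, where u=a] by metis
      have "a \<bullet> ws < c"
      proof (rule ccontr)
        assume "\<not> a \<bullet> ws < c"
        moreover have "a \<bullet> ws \<le> c" using support_fun_max(2)[OF cF nF] ws(1) by (auto simp: C_def c_def)
        ultimately have "ws \<in> face F a" using ws(1) by (auto simp: C_def face_def c_def)
        then have "v \<bullet> ws \<le> g" using support_fun_max(2)[OF face_compact(1,2)[OF cF nF, of a], of ws v] by (simp add: g_def)
        then show False using ws(1) e by (auto simp: C_def)
      qed
      define \<eta> where "\<eta> = c - a \<bullet> ws"
      have eta: "\<eta> > 0" using \<open>a \<bullet> ws < c\<close> by (simp add: \<eta>_def)
      obtain N :: nat where N: "real N > 2 * (norm v * R + 1) / \<eta>" using reals_Archimedean2 by blast
      show ?thesis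
      proof (intro exI allI impI)
        fix n assume "N \<le> n"
        define t where "t = 1 / real (Suc n)"
        have tpos: "t > 0" by (simp add: t_def)
        have "2 * (norm v * R + 1) / \<eta> < real (Suc n)" using N \<open>N \<le> n\<close> by simp
        then have "2 * (norm v * R + 1) < real (Suc n) * \<eta>" using eta by (simp add: divide_less_eq mult.commute)
        then have tsmall: "t * (2 * (norm v * R + 1)) < \<eta>" using eta unfolding t_def
          by (simp add: divide_less_eq mult.commute)
        obtain w where w: "w \<in> F" "support_fun F (a + t *\<^sub>R v) = (a + t *\<^sub>R v) \<bullet> w"
          using maxw unfolding t_def by blast
        have "w \<notin> C"
        proof
          assume wC: "w \<in> C"
          have "(a + t *\<^sub>R v) \<bullet> w0 \<le> (a + t *\<^sub>R v) \<bullet> w"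
            using support_fun_max(2)[OF cF nF w0F(1), where u="a + t *\<^sub>R v"] w(2) by simp
          then have "c + t * g \<le> a \<bullet> w + t * (v \<bullet> w)" using w0 w0F by (simp add: inner_add_left)
          moreover have "a \<bullet> w \<le> a \<bullet> ws" using ws(2)[OF wC] .
          moreover have "v \<bullet> w \<le> norm v * R"
          proof -
            have "v \<bullet> w \<le> norm v * norm w" by (rule norm_cauchy_schwarz)
            also have "\<dots> \<le> norm v * R" using R[OF w(1)] by (intro mult_left_mono) auto
            finally show ?thesis .
          qed
          moreover have "t * (v \<bullet> w) \<le> t * (norm v * R)" using calculation(3) tpos by (simp add: mult_left_mono)
          moreover have "t * (- (norm v * R)) \<le> t * g" using gabs tpos
            by (intro mult_left_mono) auto
          moreover have "t * (- (norm v * R)) = - (t * (norm v * R))" by simp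
          ultimately have "\<eta> \<le> 2 * (t * (norm v * R))" unfolding \<eta>_def by linarith
          moreover have "t * (2 * (norm v * R + 1)) = 2 * (t * (norm v * R)) + 2 * t" by (simp add: algebra_simps)
          ultimately show False using tsmall tpos by linarith
        qed
        then have "v \<bullet> w < g + e" using w(1) by (auto simp: C_def)
        then show "q n < g + e" using key[OF w(1)] w(2) unfolding t_def by force
      qed
    qed
  qed
  have "q \<longlonglongrightarrow> g"
  proof (rule LIMSEQ_I)
    fix r :: real assume "0 < r"
    then obtain N where "\<forall>n\<ge>N. q n < g + r" using upper by blast
    then show "\<exists>no. \<forall>n\<ge>no. norm (q n - g) < r" using lower \<open>0 < r\<close>
      by (metis abs_of_nonneg diff_ge_0_iff_ge diff_less_eq real_norm_def add.commute)
  qed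
  then show ?thesis unfolding q_def c_def g_def .
qed



definition Hf :: "('v::euclidean_space \<times> 'w::euclidean_space) set \<Rightarrow> 'w list \<Rightarrow> 'w \<Rightarrow> 'v \<Rightarrow> real" where
  "Hf K L v x = (if x \<in> fst ` K then support_fun (faces (fiber K x) L) v else 0)"

lemma fiber_compact:
  fixes K :: "('v::euclidean_space \<times> 'w::euclidean_space) set"
  assumes "compact K" "x \<in> fst ` K"
  shows "compact (fiber K x)" "fiber K x \<noteq> {}"
proof -
  have "fiber K x = snd ` (K \<inter> {p. fst p = x})"
  proof (intro set_eqI iffI)
    fix w assume "w \<in> fiber K x"
    then have "(x, w) \<in> K \<inter> {p. fst p = x}" by (simp add: fiber_def)
    then show "w \<in> snd ` (K \<inter> {p. fst p = x})" by (rule rev_image_eqI) simp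
  next
    fix w assume "w \<in> snd ` (K \<inter> {p. fst p = x})"
    then show "w \<in> fiber K x" by (auto simp: fiber_def)
  qed
  moreover have "closed {p :: 'v \<times> 'w. fst p = x}" by (intro closed_Collect_eq continuous_intros)
  ultimately show "compact (fiber K x)" using assms(1)
    by (auto intro!: compact_continuous_image compact_Int_closed continuous_intros)
  show "fiber K x \<noteq> {}" using assms(2) unfolding fiber_def by auto
qed

lemma Hf_base_meas:
  fixes K :: "('v::euclidean_space \<times> 'w::euclidean_space) set"
  assumes cK: "compact K"
  shows "Hf K [] v \<in> borel_measurable borel"
proof -
  have "{x. a \<le> Hf K [] v x} \<in> sets borel" for a
  proof -
    define C where "C = fst ` (K \<inter> {p. a \<le> v \<bullet> snd p})"
    have cC: "compact C" unfolding C_def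
      by (intro compact_continuous_image compact_Int_closed cK closed_Collect_le continuous_intros)
    have cS: "compact (fst ` K)" by (intro compact_continuous_image cK continuous_intros)
    have eq: "{x. a \<le> Hf K [] v x} = C \<union> {x. x \<notin> fst ` K \<and> a \<le> 0}"
    proof (intro set_eqI iffI)
      fix x assume x: "x \<in> {x. a \<le> Hf K [] v x}"
      show "x \<in> C \<union> {x. x \<notin> fst ` K \<and> a \<le> 0}"
      proof (cases "x \<in> fst ` K")
        case True
        then obtain w where w: "w \<in> fiber K x" "v \<bullet> w = support_fun (fiber K x) v"
          using support_fun_max(1)[OF fiber_compact[OF cK True]] by metis
        have "(x, w) \<in> K" using w(1) by (simp add: fiber_def)
        moreover have "a \<le> v \<bullet> w" using x True w(2) by (simp add: Hf_def)
        ultimately have "x \<in> C" unfolding C_def by (auto intro!: image_eqI[where x="(x,w)"])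
        then show ?thesis by simp
      qed (use x in \<open>auto simp: Hf_def\<close>)
    next
      fix x assume x: "x \<in> C \<union> {x. x \<notin> fst ` K \<and> a \<le> 0}"
      show "x \<in> {x. a \<le> Hf K [] v x}"
      proof (cases "x \<in> C")
        case True
        then obtain w where w: "(x, w) \<in> K" "a \<le> v \<bullet> w" by (auto simp: C_def)
        then have xS: "x \<in> fst ` K" by (auto intro!: image_eqI[where x="(x,w)"])
        have "v \<bullet> w \<le> support_fun (fiber K x) v"
          using support_fun_max(2)[OF fiber_compact[OF cK xS]] w(1) by (auto simp: fiber_def)
        then show ?thesis using w xS by (auto simp: Hf_def)
      qed (use x in \<open>auto simp: Hf_def\<close>)
    qed
    have "{x. x \<notin> fst ` K \<and> a \<le> 0} \<in> sets borel"
    proof (cases "a \<le> 0")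
      case True
      then have "{x. x \<notin> fst ` K \<and> a \<le> 0} = - fst ` K" by auto
      moreover have "open (- fst ` K)" using cS by (simp add: compact_imp_closed open_Compl)
      ultimately show ?thesis by simp
    qed simp
    moreover have "C \<in> sets borel" using cC by (simp add: compact_imp_closed borel_closed)
    ultimately show ?thesis unfolding eq by simp
  qed
  then show ?thesis by (simp add: borel_measurable_iff_ge)
qed

lemma Hf_meas:
  fixes K :: "('v::euclidean_space \<times> 'w::euclidean_space) set"
  assumes cK: "compact K"
  shows "\<forall>v. Hf K L v \<in> borel_measurable borel"
proof (induction L rule: rev_induct)
  case Nil then show ?case using Hf_base_meas[OF cK] by blast
next
  case (snoc a L)
  show ?case
  proof
    fix v
    show "Hf K (L @ [a]) v \<in> borel_measurable borel"
    proof (rule borel_measurable_LIMSEQ_real)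
      fix x
      show "(\<lambda>n. real (Suc n) * (Hf K L (a + (1 / real (Suc n)) *\<^sub>R v) x - Hf K L a x)) \<longlonglongrightarrow> Hf K (L @ [a]) v x"
      proof (cases "x \<in> fst ` K")
        case True
        have f: "compact (faces (fiber K x) L) \<and> faces (fiber K x) L \<noteq> {}"
          using faces_compact[OF fiber_compact[OF cK True]] by blast
        show ?thesis using support_deriv[of "faces (fiber K x) L" a v] f True
          by (simp add: Hf_def faces_snoc)
      qed (simp add: Hf_def)
    next
      fix n
      show "(\<lambda>x. real (Suc n) * (Hf K L (a + (1 / real (Suc n)) *\<^sub>R v) x - Hf K L a x)) \<in> borel_measurable borel"
      proof -
        have m1: "Hf K L (a + (1 / real (Suc n)) *\<^sub>R v) \<in> borel_measurable borel" using snoc by blast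
        have m2: "Hf K L a \<in> borel_measurable borel" using snoc by blast
        show ?thesis using m1 m2 by measurable
      qed
    qed
  qed
qed



definition bl :: "'w::euclidean_space list" where
  "bl = (SOME l. set l = Basis)"

lemma set_bl: "set (bl :: 'w::euclidean_space list) = Basis"
  unfolding bl_def by (rule someI_ex) (rule finite_list[OF finite_Basis])

definition sel :: "('v::euclidean_space \<times> 'w::euclidean_space) set \<Rightarrow> 'w list \<Rightarrow> 'v \<Rightarrow> 'w" where
  "sel K L0 x = (\<Sum>b\<in>Basis. Hf K (L0 @ bl) b x *\<^sub>R b)"

lemma sel_meas:
  fixes K :: "('v::euclidean_space \<times> 'w::euclidean_space) set"
  assumes "compact K"
  shows "sel K L0 \<in> borel_measurable borel"
proof -
  have "\<And>b. Hf K (L0 @ bl) b \<in> borel_measurable borel" using Hf_meas[OF assms] by blast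
  then show ?thesis unfolding sel_def by measurable
qed

lemma faces_coord:
  fixes G :: "'a::euclidean_space set"
  assumes "b \<in> set l"
  shows "\<exists>c. \<forall>q\<in>faces G (L0 @ l). b \<bullet> q = c"
proof -
  obtain l1 l2 where l: "l = l1 @ b # l2"
    using split_list[OF assms(1)] by blast
  have "faces G (L0 @ l) = faces (face (faces G (L0 @ l1)) b) l2"
    unfolding l faces_def by simp
  then have "\<forall>q\<in>faces G (L0 @ l). q \<in> face (faces G (L0 @ l1)) b" using faces_subset by blast
  then show ?thesis by (auto simp: face_def)
qed

lemma sel_in:
  fixes K :: "('v::euclidean_space \<times> 'w::euclidean_space) set"
  assumes cK: "compact K" and xS: "x \<in> fst ` K"
  shows "sel K L0 x \<in> faces (fiber K x) L0"
proof -
  let ?Q = "faces (fiber K x) (L0 @ bl)"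
  have Q: "compact ?Q \<and> ?Q \<noteq> {}" using faces_compact[OF fiber_compact[OF cK xS]] by blast
  then obtain q where q: "q \<in> ?Q" by blast
  have "Hf K (L0 @ bl) b x = b \<bullet> q" if b: "b \<in> Basis" for b
  proof -
    have bl: "b \<in> set bl" using b set_bl by blast
    obtain c where c: "\<forall>q\<in>?Q. b \<bullet> q = c" using faces_coord[OF bl] by blast
    have "(\<lambda>w. b \<bullet> w) ` ?Q = {b \<bullet> q}"
      using c q by auto
    then show ?thesis using xS by (simp add: Hf_def support_fun_def)
  qed
  then have "sel K L0 x = (\<Sum>b\<in>Basis. (q \<bullet> b) *\<^sub>R b)"
    unfolding sel_def by (intro sum.cong) (auto simp: inner_commute)
  also have "\<dots> = q" by (rule euclidean_representation)
  finally have "sel K L0 x = q" .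
  moreover have "q \<in> faces (fiber K x) L0" using q faces_subset[of "faces (fiber K x) L0" bl] by (simp add: faces_append subset_iff)
  ultimately show ?thesis by simp
qed



context
  fixes K :: "('v::euclidean_space \<times> 'w::euclidean_space) set"
  assumes cK: "compact K"
begin

lemma S_compact: "compact (fst ` K)"
  by (intro compact_continuous_image cK continuous_intros)

lemma S_sets: "fst ` K \<in> sets lborel"
  using S_compact by (simp add: compact_imp_closed borel_closed)

lemma ind_integrable: "integrable lborel (\<lambda>x. c * indicator (fst ` K) x :: real)"
proof -
  have "integrable lborel (indicator (fst ` K) :: 'v \<Rightarrow> real)"
    using S_sets emeasure_bounded_finite[OF compact_imp_bounded[OF S_compact]]
    by (simp add: integrable_indicator_iff)
  then show ?thesis by simp
qed

lemma bound_R: "\<exists>R\<ge>0. \<forall>x\<in>fst ` K. \<forall>w\<in>fiber K x. norm w \<le> R"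
proof -
  obtain R where R: "\<And>p. p \<in> K \<Longrightarrow> norm p \<le> R"
    using compact_imp_bounded[OF cK] by (auto simp: bounded_iff)
  have "norm w \<le> max R 0" if "x \<in> fst ` K" "w \<in> fiber K x" for x w
  proof -
    have "(x, w) \<in> K" using that(2) by (simp add: fiber_def)
    then have "norm (x, w) \<le> R" by (rule R)
    then show ?thesis using norm_snd_le[of w x] by linarith
  qed
  then show ?thesis by (intro exI[of _ "max R 0"]) auto
qed

lemma sec_meas:
  assumes "measurable_section K \<delta>"
  shows "(\<lambda>x. indicator (fst ` K) x *\<^sub>R \<delta> x) \<in> borel_measurable borel"
  using assms by (simp add: measurable_section_def set_borel_measurable_def)

lemma sec_integrable:
  assumes "measurable_section K \<delta>"
  shows "integrable lborel (\<lambda>x. indicator (fst ` K) x *\<^sub>R \<delta> x)"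
proof -
  obtain R where R: "R \<ge> 0" "\<forall>x\<in>fst ` K. \<forall>w\<in>fiber K x. norm w \<le> R" using bound_R by blast
  show ?thesis
  proof (rule Bochner_Integration.integrable_bound[OF ind_integrable[of R]])
    show "(\<lambda>x. indicator (fst ` K) x *\<^sub>R \<delta> x) \<in> borel_measurable lborel"
      using sec_meas[OF assms] by simp
    show "AE x in lborel. norm (indicator (fst ` K) x *\<^sub>R \<delta> x) \<le> norm (R * indicator (fst ` K) x)"
      using assms R by (auto simp: measurable_section_def indicator_def)
  qed
qed

lemma inner_I:
  assumes "measurable_section K \<delta>"
  shows "u \<bullet> (LINT x:(fst ` K)|lborel. \<delta> x) = integral\<^sup>L lborel (\<lambda>x. indicator (fst ` K) x * (u \<bullet> \<delta> x))"
proof -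
  have "u \<bullet> (LINT x:(fst ` K)|lborel. \<delta> x) = integral\<^sup>L lborel (\<lambda>x. u \<bullet> (indicator (fst ` K) x *\<^sub>R \<delta> x))"
    unfolding set_lebesgue_integral_def using sec_integrable[OF assms] by (rule integral_inner_right[symmetric])
  then show ?thesis by simp
qed

lemma inner_meas:
  assumes "measurable_section K \<delta>"
  shows "(\<lambda>x. indicator (fst ` K) x * (u \<bullet> \<delta> x)) \<in> borel_measurable borel"
proof -
  have "(\<lambda>x. u \<bullet> (indicator (fst ` K) x *\<^sub>R \<delta> x)) \<in> borel_measurable borel"
    using sec_meas[OF assms] by measurable
  then show ?thesis by simp
qed

lemma inner_integrable:
  assumes "measurable_section K \<delta>"
  shows "integrable lborel (\<lambda>x. indicator (fst ` K) x * (u \<bullet> \<delta> x))"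
proof -
  have "integrable lborel (\<lambda>x. u \<bullet> (indicator (fst ` K) x *\<^sub>R \<delta> x))"
    using sec_integrable[OF assms] by (rule integrable_inner_right)
  then show ?thesis by simp
qed

lemma Hf_integrable: "integrable lborel (\<lambda>x. indicator (fst ` K) x * Hf K L u x)"
proof -
  obtain R where R: "R \<ge> 0" "\<forall>x\<in>fst ` K. \<forall>w\<in>fiber K x. norm w \<le> R" using bound_R by blast
  have b: "\<bar>Hf K L u x\<bar> \<le> norm u * R" if "x \<in> fst ` K" for x
  proof -
    show ?thesis
    proof -
      have f: "compact (faces (fiber K x) L) \<and> faces (fiber K x) L \<noteq> {}"
        using faces_compact[OF fiber_compact[OF cK that]] by blast
      then obtain w where w: "w \<in> faces (fiber K x) L" "u \<bullet> w = support_fun (faces (fiber K x) L) u"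
        using support_fun_max(1)[of "faces (fiber K x) L" u] by blast
      have "w \<in> fiber K x" using w(1) faces_subset by blast
      then have nw: "norm w \<le> R" using R that by blast
      have "\<bar>u \<bullet> w\<bar> \<le> norm u * norm w" by (rule Cauchy_Schwarz_ineq2)
      also have "\<dots> \<le> norm u * R" using nw by (intro mult_left_mono) auto
      finally show ?thesis using w(2) that by (auto simp: Hf_def)
    qed
  qed
  show ?thesis
  proof (rule Bochner_Integration.integrable_bound[OF ind_integrable[of "norm u * R"]])
    show "(\<lambda>x. indicator (fst ` K) x * Hf K L u x) \<in> borel_measurable lborel"
    proof -
      have "Hf K L u \<in> borel_measurable borel" using Hf_meas[OF cK, of L] by blast
      then show ?thesis using S_sets by measurable
    qed
    show "AE x in lborel. norm (indicator (fst ` K) x * Hf K L u x) \<le> norm (norm u * R * indicator (fst ` K) x)"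
      using b R by (auto simp: indicator_def)
  qed
qed

end


context
  fixes K :: "('v::euclidean_space \<times> 'w::euclidean_space) set"
  assumes cK: "compact K"
begin

lemma sel_section: "measurable_section K (sel K L0)"
proof -
  have "(\<lambda>x. indicator (fst ` K) x *\<^sub>R sel K L0 x) \<in> borel_measurable borel"
  proof -
    have "sel K L0 \<in> borel_measurable borel" by (rule sel_meas[OF cK])
    moreover have "fst ` K \<in> sets borel" using S_sets[OF cK] by simp
    ultimately show ?thesis by measurable
  qed
  moreover have "\<forall>x\<in>fst ` K. sel K L0 x \<in> fiber K x"
    using sel_in[OF cK] faces_subset by blast
  ultimately show ?thesis by (simp add: measurable_section_def set_borel_measurable_def)
qed

lemma main_ind:
  "\<forall>\<delta>. measurable_section K \<delta> \<longrightarrow>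
     ((LINT x:(fst ` K)|lborel. \<delta> x) \<in> faces (fiber_body K) U \<longleftrightarrow>
      (AE x in lborel. x \<in> fst ` K \<longrightarrow> \<delta> x \<in> faces (fiber K x) U))"
proof (induction U rule: rev_induct)
  case Nil
  show ?case by (auto simp: fiber_body_def measurable_section_def)
next
  case (snoc u U)
  let ?S = "fst ` K"
  let ?F = "faces (fiber_body K) U"
  let ?g = "\<lambda>x. indicator ?S x * Hf K U u x"
  define M where "M = integral\<^sup>L lborel ?g"
  have facesx: "compact (faces (fiber K x) U) \<and> faces (fiber K x) U \<noteq> {}" if "x \<in> ?S" for x
    using faces_compact[OF fiber_compact[OF cK that]] by blast
  have le_g: "AE x in lborel. indicator ?S x * (u \<bullet> \<epsilon> x) \<le> ?g x"
    if "AE x in lborel. x \<in> ?S \<longrightarrow> \<epsilon> x \<in> faces (fiber K x) U" for \<epsilon>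
    using that
  proof (rule AE_mp, intro AE_I2 impI)
    fix x assume h: "x \<in> ?S \<longrightarrow> \<epsilon> x \<in> faces (fiber K x) U"
    show "indicator ?S x * (u \<bullet> \<epsilon> x) \<le> ?g x"
    proof (cases "x \<in> ?S")
      case True
      then have "u \<bullet> \<epsilon> x \<le> support_fun (faces (fiber K x) U) u"
        using support_fun_max(2)[of "faces (fiber K x) U" "\<epsilon> x" u] facesx h by blast
      then show ?thesis using True by (simp add: Hf_def)
    qed simp
  qed
  have upper: "u \<bullet> z \<le> M" if z: "z \<in> ?F" for z
  proof -
    have "z \<in> fiber_body K" using z faces_subset by blast
    then obtain \<epsilon> where e: "measurable_section K \<epsilon>" "z = (LINT x:?S|lborel. \<epsilon> x)"
      by (auto simp: fiber_body_def)
    have ae: "AE x in lborel. x \<in> ?S \<longrightarrow> \<epsilon> x \<in> faces (fiber K x) U" using snoc e z by blast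
    have "u \<bullet> z = integral\<^sup>L lborel (\<lambda>x. indicator ?S x * (u \<bullet> \<epsilon> x))"
      using e inner_I[OF cK] by blast
    also have "\<dots> \<le> M" unfolding M_def
      by (intro integral_mono_AE inner_integrable[OF cK e(1)] Hf_integrable[OF cK] le_g ae)
    finally show ?thesis .
  qed
  define p where "p = sel K (U @ [u])"
  have ps: "measurable_section K p" unfolding p_def by (rule sel_section)
  have pin: "p x \<in> face (faces (fiber K x) U) u" if "x \<in> ?S" for x
    using sel_in[OF cK that, of "U @ [u]"] by (simp add: p_def faces_snoc)
  have "AE x in lborel. x \<in> ?S \<longrightarrow> p x \<in> faces (fiber K x) U"
    using pin face_subset by blast
  then have pF: "(LINT x:?S|lborel. p x) \<in> ?F" using snoc ps by blast
  have pM: "u \<bullet> (LINT x:?S|lborel. p x) = M"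
  proof -
    have "u \<bullet> (LINT x:?S|lborel. p x) = integral\<^sup>L lborel (\<lambda>x. indicator ?S x * (u \<bullet> p x))"
      using inner_I[OF cK ps] by blast
    also have "\<dots> = M" unfolding M_def
    proof (rule Bochner_Integration.integral_cong)
      fix x show "indicator ?S x * (u \<bullet> p x) = ?g x"
        using pin[of x] by (cases "x \<in> ?S") (auto simp: face_def Hf_def)
    qed simp
    finally show ?thesis .
  qed
  have supF: "support_fun ?F u = M"
    unfolding support_fun_def using pF pM upper by (intro cSup_eq_maximum) auto
  show ?case
  proof (intro allI impI)
    fix \<delta> assume ds: "measurable_section K \<delta>"
    let ?y = "LINT x:?S|lborel. \<delta> x"
    have yu: "u \<bullet> ?y = integral\<^sup>L lborel (\<lambda>x. indicator ?S x * (u \<bullet> \<delta> x))"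
      using inner_I[OF cK ds] by blast
    show "?y \<in> faces (fiber_body K) (U @ [u]) \<longleftrightarrow>
          (AE x in lborel. x \<in> ?S \<longrightarrow> \<delta> x \<in> faces (fiber K x) (U @ [u]))"
    proof
      assume "?y \<in> faces (fiber_body K) (U @ [u])"
      then have yF: "?y \<in> ?F" and yM: "u \<bullet> ?y = M"
        using supF by (auto simp: faces_snoc face_def)
      have aeU: "AE x in lborel. x \<in> ?S \<longrightarrow> \<delta> x \<in> faces (fiber K x) U" using snoc ds yF by blast
      define D where "D = (\<lambda>x. ?g x - indicator ?S x * (u \<bullet> \<delta> x))"
      have Dint: "integrable lborel D" unfolding D_def
        by (intro Bochner_Integration.integrable_diff Hf_integrable[OF cK] inner_integrable[OF cK ds])
      have Dnn: "AE x in lborel. 0 \<le> D x" using le_g[OF aeU] unfolding D_def by auto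
      have "integral\<^sup>L lborel D = M - u \<bullet> ?y"
        unfolding D_def M_def yu
        by (intro Bochner_Integration.integral_diff Hf_integrable[OF cK] inner_integrable[OF cK ds])
      then have "integral\<^sup>L lborel D = 0" using yM by simp
      then have D0: "AE x in lborel. D x = 0" using integral_nonneg_eq_0_iff_AE[OF Dint Dnn] by simp
      show "AE x in lborel. x \<in> ?S \<longrightarrow> \<delta> x \<in> faces (fiber K x) (U @ [u])"
        using D0 aeU
      proof (eventually_elim)
        case (elim x)
        show ?case
        proof
          assume xS: "x \<in> ?S"
          then have "u \<bullet> \<delta> x = support_fun (faces (fiber K x) U) u"
            using elim(1) by (simp add: D_def Hf_def)
          then show "\<delta> x \<in> faces (fiber K x) (U @ [u])"
            using elim(2) xS by (simp add: faces_snoc face_def)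
        qed
      qed
    next
      assume ae: "AE x in lborel. x \<in> ?S \<longrightarrow> \<delta> x \<in> faces (fiber K x) (U @ [u])"
      have aeU: "AE x in lborel. x \<in> ?S \<longrightarrow> \<delta> x \<in> faces (fiber K x) U"
        using ae by eventually_elim (auto simp: faces_snoc face_def)
      then have yF: "?y \<in> ?F" using snoc ds by blast
      have "integral\<^sup>L lborel (\<lambda>x. indicator ?S x * (u \<bullet> \<delta> x)) = M"
        unfolding M_def
      proof (rule integral_cong_AE)
        show "(\<lambda>x. indicator ?S x * (u \<bullet> \<delta> x)) \<in> borel_measurable lborel"
          using inner_meas[OF cK ds] by simp
        show "?g \<in> borel_measurable lborel"
          using Hf_integrable[OF cK] by (rule borel_measurable_integrable)
        show "AE x in lborel. indicator ?S x * (u \<bullet> \<delta> x) = ?g x"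
          using ae by eventually_elim (auto simp: faces_snoc face_def Hf_def)
      qed
      then have "u \<bullet> ?y = support_fun ?F u" using yu supF by simp
      then show "?y \<in> faces (fiber_body K) (U @ [u])"
        using yF by (simp add: faces_snoc face_def)
    qed
  qed
qed

end

theorem mainTheorem5:
  fixes K :: "('v::euclidean_space \<times> 'w::euclidean_space) set"
    and us :: "'w list" and y :: 'w and \<gamma> :: "'v \<Rightarrow> 'w"
  assumes "convex_body K"
    and "distinct us" and "independent (set us)"
    and "y \<in> fiber_body K"
    and "measurable_section K \<gamma>"
    and "y = (LINT x:(fst ` K)|lborel. \<gamma> x)"
  shows "(y \<in> faces (fiber_body K) us \<longleftrightarrow>
           (AE x in lborel. x \<in> fst ` K \<longrightarrow> \<gamma> x \<in> faces (fiber K x) us))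
         \<and> faces (fiber_body K) us =
           {(LINT x:(fst ` K)|lborel. \<delta> x) | \<delta>. measurable_section K \<delta> \<and>
              (AE x in lborel. x \<in> fst ` K \<longrightarrow> \<delta> x \<in> faces (fiber K x) us)}"
proof -
  have cK: "compact K" using assms(1) by (simp add: convex_body_def)
  note P = main_ind[OF cK, of us]
  have 1: "y \<in> faces (fiber_body K) us \<longleftrightarrow>
           (AE x in lborel. x \<in> fst ` K \<longrightarrow> \<gamma> x \<in> faces (fiber K x) us)"
    using P assms(5,6) by blast
  have 2: "faces (fiber_body K) us =
           {(LINT x:(fst ` K)|lborel. \<delta> x) | \<delta>. measurable_section K \<delta> \<and>
              (AE x in lborel. x \<in> fst ` K \<longrightarrow> \<delta> x \<in> faces (fiber K x) us)}"
  proof (intro set_eqI iffI)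
    fix z assume z: "z \<in> faces (fiber_body K) us"
    then have "z \<in> fiber_body K" using faces_subset by blast
    then obtain \<delta> where d: "measurable_section K \<delta>" "z = (LINT x:(fst ` K)|lborel. \<delta> x)"
      by (auto simp: fiber_body_def)
    then have "AE x in lborel. x \<in> fst ` K \<longrightarrow> \<delta> x \<in> faces (fiber K x) us" using P z by blast
    then show "z \<in> {(LINT x:(fst ` K)|lborel. \<delta> x) | \<delta>. measurable_section K \<delta> \<and>
              (AE x in lborel. x \<in> fst ` K \<longrightarrow> \<delta> x \<in> faces (fiber K x) us)}" using d by blast
  next
    fix z assume "z \<in> {(LINT x:(fst ` K)|lborel. \<delta> x) | \<delta>. measurable_section K \<delta> \<and>
              (AE x in lborel. x \<in> fst ` K \<longrightarrow> \<delta> x \<in> faces (fiber K x) us)}"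
    then obtain \<delta> where d: "measurable_section K \<delta>" "z = (LINT x:(fst ` K)|lborel. \<delta> x)"
      "AE x in lborel. x \<in> fst ` K \<longrightarrow> \<delta> x \<in> faces (fiber K x) us" by blast
    then show "z \<in> faces (fiber_body K) us" using P by blast
  qed
  show ?thesis using 1 2 by blast
qed

end
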